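(* Consider the vector nonlinear Riemann–Hilbert problem on the real line $$\phi_i^+(\lambda)=\mathcal R_i(\phi_1^-(\lambda),\phi_2^-(\lambda),\lambda),\quad i=1,2,\ \lambda\in\mathbb R,$$ where $\mathcal R_i(\zeta_1,\zeta_2,\lambda)=\zeta_i+R_i(\zeta_1,\zeta_2,\lambda)$ for given spectral data $R_1,R_2$ (defined for $(\zeta_1,\zeta_2)\in\mathbb C^2$, $\lambda\in\mathbb R$, independent of $x,y,z,t$), and where $\phi_i^{+}$ (resp. $\phi_i^-$) are analytic in $\lambda$ in the upper (resp. lower) half-plane and depend on parameters $(x,y,z,t)$, with normalization $$\phi_1^{\pm}(\lambda)=-y+O(\lambda^{-1}),\qquad \phi_2^{\pm}(\lambda)=x+\lambda t+O(\lambda^{-1}),\qquad |\lambda|\gg1.$$ Assume this Riemann–Hilbert problem and its linearization $\vec\sigma^+=\mathcal J\vec\sigma^-$ (where $\mathcal J$ is the Jacobian matrix $\mathcal J_{ij}=\partial\mathcal R_i/\partial\zeta_j$ evaluated at $\vec\phi^-$) are uniquely solvable. Define $u$ by $$u_x=\lim_{\lambda\to\infty}\lambda(\phi_1^{\pm}+y),\qquad u_y=\lim_{\lambda\to\infty}\lambda(\phi_2^{\pm}-x-\lambda t).$$ Then $\vec\phi^{\pm}=(\phi_1^\pm,\phi_2^\pm)$ are common eigenfunctions of the vector fields $$T=\partial_t+(u_{xy}-\lambda)\partial_x-u_{xx}\partial_y,\qquad Z=\lambda\partial_z-u_{yz}\partial_x+u_{zx}\partial_y,$$ i.e. $T\phi_i^\pm=Z\phi_i^\pm=0$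 for $i=1,2$.
   Context: The vector fields $T,Z$ form the Lax pair of the Doubrov–Ferapontov modified heavenly equation $u_{zt}+u_{zx}u_{xy}-u_{yz}u_{xx}=0$. Subscripts denote partial derivatives. *)

theory Defs
  imports "HOL-Complex_Analysis.Complex_Analysis" "HOL-Library.Landau_Symbols"
begin

text \<open>Parameters are (x,y,z,t), indexed k = 0,1,2,3 respectively.\<close>

definition coord :: "nat \<Rightarrow> real \<Rightarrow> real \<Rightarrow> real \<Rightarrow> real \<Rightarrow> real" where
  "coord k x y z t = (if k = 0 then x else if k = 1 then y else if k = 2 then z else t)"

definition along :: "nat \<Rightarrow> (real \<Rightarrow> real \<Rightarrow> real \<Rightarrow> real \<Rightarrow> 'a) \<Rightarrow>
    real \<Rightarrow> real \<Rightarrow> real \<Rightarrow> real \<Rightarrow> real \<Rightarrow> 'a" where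
  "along k f x y z t s = (if k = 0 then f s y z t else if k = 1 then f x s z t
                          else if k = 2 then f x y s t else f x y z s)"

definition pd :: "nat \<Rightarrow> (real \<Rightarrow> real \<Rightarrow> real \<Rightarrow> real \<Rightarrow> 'a::real_normed_vector) \<Rightarrow>
    real \<Rightarrow> real \<Rightarrow> real \<Rightarrow> real \<Rightarrow> 'a" where
  "pd k f x y z t = vector_derivative (along k f x y z t) (at (coord k x y z t))"

definition UHP :: "complex set" where "UHP = {l. Im l \<ge> 0}"
definition LHP :: "complex set" where "LHP = {l. Im l \<le> 0}"
definition UHPo :: "complex set" where "UHPo = {l. Im l > 0}"
definition LHPo :: "complex set" where "LHPo = {l. Im l < 0}"

definition at_inf_in :: "complex set \<Rightarrow> complex filter" where
  "at_inf_in S = inf at_infinity (principal S)"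

definition calR :: "(nat \<Rightarrow> complex \<Rightarrow> complex \<Rightarrow> real \<Rightarrow> complex) \<Rightarrow>
    nat \<Rightarrow> complex \<Rightarrow> complex \<Rightarrow> real \<Rightarrow> complex" where
  "calR R i z1 z2 l = (if i = 1 then z1 else z2) + R i z1 z2 l"

definition Jac :: "(nat \<Rightarrow> complex \<Rightarrow> complex \<Rightarrow> real \<Rightarrow> complex) \<Rightarrow> real \<Rightarrow>
    complex \<Rightarrow> complex \<Rightarrow> nat \<Rightarrow> nat \<Rightarrow> complex" where
  "Jac R l z1 z2 i j = (if j = 1 then deriv (\<lambda>s. calR R i s z2 l) z1
                        else deriv (\<lambda>s. calR R i z1 s l) z2)"

definition rh_solution :: "(nat \<Rightarrow> complex \<Rightarrow> complex \<Rightarrow> real \<Rightarrow> complex) \<Rightarrow>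
    real \<Rightarrow> real \<Rightarrow> real \<Rightarrow> (nat \<Rightarrow> complex \<Rightarrow> complex) \<Rightarrow> (nat \<Rightarrow> complex \<Rightarrow> complex) \<Rightarrow> bool" where
  "rh_solution R x y t P M \<longleftrightarrow>
     (\<forall>i\<in>{1,2}. P i holomorphic_on UHPo \<and> continuous_on UHP (P i)
              \<and> M i holomorphic_on LHPo \<and> continuous_on LHP (M i)) \<and>
     (\<forall>i\<in>{1,2}. \<forall>l::real. P i (complex_of_real l) =
         calR R i (M 1 (complex_of_real l)) (M 2 (complex_of_real l)) l) \<and>
     (\<lambda>l. P 1 l + complex_of_real y) \<in> O[at_inf_in UHP](\<lambda>l. 1 / l) \<and>
     (\<lambda>l. M 1 l + complex_of_real y) \<in> O[at_inf_in LHP](\<lambda>l. 1 / l) \<and>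
     (\<lambda>l. P 2 l - complex_of_real x - l * complex_of_real t) \<in> O[at_inf_in UHP](\<lambda>l. 1 / l) \<and>
     (\<lambda>l. M 2 l - complex_of_real x - l * complex_of_real t) \<in> O[at_inf_in LHP](\<lambda>l. 1 / l)"

definition lead :: "nat \<Rightarrow> real \<Rightarrow> real \<Rightarrow> real \<Rightarrow> real \<Rightarrow> complex \<Rightarrow> complex" where
  "lead i x y z t l = (if i = 1 then - complex_of_real y
                       else complex_of_real x + l * complex_of_real t)"

definition Tfield :: "(real \<Rightarrow> real \<Rightarrow> real \<Rightarrow> real \<Rightarrow> complex) \<Rightarrow> complex \<Rightarrow>
    (real \<Rightarrow> real \<Rightarrow> real \<Rightarrow> real \<Rightarrow> complex) \<Rightarrow> real \<Rightarrow> real \<Rightarrow> real \<Rightarrow> real \<Rightarrow> complex" where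
  "Tfield u l f x y z t =
     pd 3 f x y z t + (pd 0 (pd 1 u) x y z t - l) * pd 0 f x y z t
       - pd 0 (pd 0 u) x y z t * pd 1 f x y z t"

definition Zfield :: "(real \<Rightarrow> real \<Rightarrow> real \<Rightarrow> real \<Rightarrow> complex) \<Rightarrow> complex \<Rightarrow>
    (real \<Rightarrow> real \<Rightarrow> real \<Rightarrow> real \<Rightarrow> complex) \<Rightarrow> real \<Rightarrow> real \<Rightarrow> real \<Rightarrow> real \<Rightarrow> complex" where
  "Zfield u l f x y z t =
     l * pd 2 f x y z t - pd 2 (pd 1 u) x y z t * pd 0 f x y z t
       + pd 2 (pd 0 u) x y z t * pd 1 f x y z t"

end

theory Submission
  imports Defs
begin


lemma along_coord: "along k f x y z t (coord k x y z t) = f x y z t"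
  by (simp add: along_def coord_def)

lemma along_eq: "along k f x y z t = (\<lambda>s. if k = 0 then f s y z t else if k = 1 then f x s z t
                          else if k = 2 then f x y s t else f x y z s)"
  by (rule ext) (simp add: along_def)

lemma chain2:
  fixes F :: "complex \<Rightarrow> complex \<Rightarrow> complex"
  assumes "(m1 has_vector_derivative d1) (at c)" "(m2 has_vector_derivative d2) (at c)"
    "((\<lambda>w. F (fst w) (snd w)) has_derivative (\<lambda>h. J1 * fst h + J2 * snd h)) (at (m1 c, m2 c))"
  shows "((\<lambda>s. F (m1 s) (m2 s)) has_vector_derivative (J1 * d1 + J2 * d2)) (at c)"
proof -
  have "((\<lambda>s. (m1 s, m2 s)) has_derivative (\<lambda>h. (h *\<^sub>R d1, h *\<^sub>R d2))) (at c)"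
    using assms(1,2) unfolding has_vector_derivative_def by (rule has_derivative_Pair)
  from has_derivative_compose[OF this assms(3)]
  have "((\<lambda>s. F (m1 s) (m2 s)) has_derivative (\<lambda>h. J1 * (h *\<^sub>R d1) + J2 * (h *\<^sub>R d2))) (at c)"
    by simp
  moreover have "(\<lambda>h. J1 * (h *\<^sub>R d1) + J2 * (h *\<^sub>R d2)) = (\<lambda>h. h *\<^sub>R (J1 * d1 + J2 * d2))"
    by (auto simp: scaleR_conv_of_real algebra_simps)
  ultimately show ?thesis unfolding has_vector_derivative_def by simp
qed

lemma pd_diff:
  assumes "along k f x y z t differentiable at (coord k x y z t)"
    "along k g x y z t differentiable at (coord k x y z t)"
  shows "pd k (\<lambda>x y z t. f x y z t - g x y z t) x y z t = pd k f x y z t - pd k g x y z t"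
proof -
  have "along k (\<lambda>x y z t. f x y z t - g x y z t) x y z t = (\<lambda>s. along k f x y z t s - along k g x y z t s)"
    by (auto simp: along_def)
  then show ?thesis unfolding pd_def using assms by simp
qed

definition Ld :: "nat \<Rightarrow> nat \<Rightarrow> complex \<Rightarrow> complex" where
  "Ld i k l = (if i = 1 then (if k = 1 then -1 else 0) else (if k = 0 then 1 else if k = 3 then l else 0))"

lemma lead_vd:
  assumes "i \<in> {1,2}" "k < 4"
  shows "(along k (\<lambda>x y z t. lead i x y z t l) x y z t has_vector_derivative Ld i k l) (at (coord k x y z t))"
proof -
  have k: "k = 0 \<or> k = 1 \<or> k = 2 \<or> k = 3" using assms(2) by auto
  have a: "((\<lambda>s. complex_of_real s) has_vector_derivative 1) (at r)" for r
    by (rule has_vector_derivative_real_field derivative_eq_intros | simp)+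
  have b: "((\<lambda>s. c + l * complex_of_real s) has_vector_derivative l) (at r)" for r c
    by (rule has_vector_derivative_real_field derivative_eq_intros | simp)+
  have c: "((\<lambda>s. complex_of_real s + c) has_vector_derivative 1) (at r)" for r c
    by (rule has_vector_derivative_real_field derivative_eq_intros | simp)+
  have d: "((\<lambda>s. - complex_of_real s) has_vector_derivative -1) (at r)" for r
    by (rule has_vector_derivative_real_field derivative_eq_intros | simp)+
  have i: "i = 1 \<or> i = 2" using assms(1) by auto
  from i k show ?thesis
    by (elim disjE) (simp_all add: along_eq lead_def Ld_def coord_def a b c d)
qed

lemma lead_pd:
  assumes "i \<in> {1,2}" "k < 4"
  shows "pd k (\<lambda>x y z t. lead i x y z t l) x y z t = Ld i k l"
  using lead_vd[OF assms] unfolding pd_def by (rule vector_derivative_at)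

lemma lead_diff:
  assumes "i \<in> {1,2}" "k < 4"
  shows "along k (\<lambda>x y z t. lead i x y z t l) x y z t differentiable at (coord k x y z t)"
  using lead_vd[OF assms] unfolding has_vector_derivative_def differentiable_def by blast

lemma TZ_lim:
  fixes phi :: "nat \<Rightarrow> real \<Rightarrow> real \<Rightarrow> real \<Rightarrow> real \<Rightarrow> complex \<Rightarrow> complex"
    and u :: "real \<Rightarrow> real \<Rightarrow> real \<Rightarrow> real \<Rightarrow> complex"
  assumes diff: "\<And>k l. k < 4 \<Longrightarrow> l \<in> S \<Longrightarrow>
      along k (\<lambda>x y z t. phi i x y z t l) x y z t differentiable (at (coord k x y z t))"
  and tw: "\<And>k. k < 4 \<Longrightarrow> ((\<lambda>l. l * pd k (\<lambda>x y z t. phi i x y z t l - lead i x y z t l) x y z t)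
          \<longlongrightarrow> pd k (pd (i - 1) u) x y z t) (at_inf_in S)"
  and i: "i \<in> {1,2}"
  shows "((\<lambda>l. Tfield u l (\<lambda>x y z t. phi i x y z t l) x y z t) \<longlongrightarrow> 0) (at_inf_in S)"
    "((\<lambda>l. Zfield u l (\<lambda>x y z t. phi i x y z t l) x y z t) \<longlongrightarrow> 0) (at_inf_in S)"
proof -
  define F where "F = at_inf_in S"
  define e where "e k l = pd k (\<lambda>x y z t. phi i x y z t l) x y z t - Ld i k l" for k l
  have evS: "eventually (\<lambda>l. l \<in> S) F" unfolding F_def at_inf_in_def
    by (simp add: eventually_inf_principal)
  have Fle: "F \<le> at_infinity" unfolding F_def at_inf_in_def by simp
  have inv0: "((\<lambda>l. inverse l) \<longlongrightarrow> (0::complex)) F"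
    using tendsto_mono[OF Fle tendsto_inverse_0] by simp
  have nz: "eventually (\<lambda>l::complex. l \<noteq> 0) F"
  proof -
    have "eventually (\<lambda>l::complex. norm l \<ge> 1) at_infinity"
      unfolding eventually_at_infinity by auto
    then have "eventually (\<lambda>l::complex. l \<noteq> 0) at_infinity"
      by (rule eventually_mono) auto
    then show ?thesis by (rule filter_leD[OF Fle])
  qed
  have lim_le: "((\<lambda>l. l * e k l) \<longlongrightarrow> pd k (pd (i - 1) u) x y z t) F" if k: "k < 4" for k
  proof -
    have "eventually (\<lambda>l. l * pd k (\<lambda>x y z t. phi i x y z t l - lead i x y z t l) x y z t = l * e k l) F"
      using evS
    proof (rule eventually_mono)
      fix l assume "l \<in> S"
      then show "l * pd k (\<lambda>x y z t. phi i x y z t l - lead i x y z t l) x y z t = l * e k l"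
        unfolding e_def
        using pd_diff[OF diff[OF k] lead_diff[OF i k], of l l] lead_pd[OF i k] by simp
    qed
    then show ?thesis using tw[OF k] unfolding F_def by (rule Lim_transform_eventually[rotated])
  qed
  have lim_e: "(e k \<longlongrightarrow> 0) F" if k: "k < 4" for k
  proof -
    have "((\<lambda>l. inverse l * (l * e k l)) \<longlongrightarrow> 0) F"
      using tendsto_mult[OF inv0 lim_le[OF k]] by simp
    moreover have "eventually (\<lambda>l. inverse l * (l * e k l) = e k l) F"
      using nz by (rule eventually_mono) simp
    ultimately show ?thesis by (rule Lim_transform_eventually)
  qed
  have pde: "pd k (\<lambda>x y z t. phi i x y z t l) x y z t = e k l + Ld i k l" for k l
    unfolding e_def by simp
  have i12: "i = 1 \<or> i = 2" using i by auto
  show "((\<lambda>l. Tfield u l (\<lambda>x y z t. phi i x y z t l) x y z t) \<longlongrightarrow> 0) (at_inf_in S)"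
  proof (cases "i = 1")
    case True
    define a where "a = pd 0 (pd 1 u) x y z t"
    define b where "b = pd 0 (pd 0 u) x y z t"
    have "((\<lambda>l. e 3 l + a * e 0 l - l * e 0 l - b * e 1 l + b) \<longlongrightarrow> 0 + a * 0 - b - b * 0 + b) F"
      using lim_le[of 0] True unfolding b_def by (intro tendsto_intros lim_e) auto
    moreover have "(\<lambda>l. Tfield u l (\<lambda>x y z t. phi i x y z t l) x y z t)
        = (\<lambda>l. e 3 l + a * e 0 l - l * e 0 l - b * e 1 l + b)"
      unfolding Tfield_def pde using True by (auto simp: Ld_def a_def b_def algebra_simps)
    ultimately show ?thesis unfolding F_def by simp
  next
    case False
    then have i2: "i = 2" using i12 by auto
    define a where "a = pd 0 (pd 1 u) x y z t"
    define b where "b = pd 0 (pd 0 u) x y z t"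
    have "((\<lambda>l. e 3 l + a + a * e 0 l - l * e 0 l - b * e 1 l) \<longlongrightarrow> 0 + a + a * 0 - a - b * 0) F"
      using lim_le[of 0] i2 unfolding a_def by (intro tendsto_intros lim_e) auto
    moreover have "(\<lambda>l. Tfield u l (\<lambda>x y z t. phi i x y z t l) x y z t)
        = (\<lambda>l. e 3 l + a + a * e 0 l - l * e 0 l - b * e 1 l)"
      unfolding Tfield_def pde using i2 by (auto simp: Ld_def a_def b_def algebra_simps)
    ultimately show ?thesis unfolding F_def by simp
  qed
  show "((\<lambda>l. Zfield u l (\<lambda>x y z t. phi i x y z t l) x y z t) \<longlongrightarrow> 0) (at_inf_in S)"
  proof (cases "i = 1")
    case True
    define c where "c = pd 2 (pd 1 u) x y z t"
    define d where "d = pd 2 (pd 0 u) x y z t"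
    have "((\<lambda>l. l * e 2 l - c * e 0 l - d + d * e 1 l) \<longlongrightarrow> d - c * 0 - d + d * 0) F"
      using lim_le[of 2] True unfolding d_def by (intro tendsto_intros lim_e) auto
    moreover have "(\<lambda>l. Zfield u l (\<lambda>x y z t. phi i x y z t l) x y z t)
        = (\<lambda>l. l * e 2 l - c * e 0 l - d + d * e 1 l)"
      unfolding Zfield_def pde using True by (auto simp: Ld_def c_def d_def algebra_simps)
    ultimately show ?thesis unfolding F_def by simp
  next
    case False
    then have i2: "i = 2" using i12 by auto
    define c where "c = pd 2 (pd 1 u) x y z t"
    define d where "d = pd 2 (pd 0 u) x y z t"
    have "((\<lambda>l. l * e 2 l - c - c * e 0 l + d * e 1 l) \<longlongrightarrow> c - c - c * 0 + d * 0) F"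
      using lim_le[of 2] i2 unfolding c_def by (intro tendsto_intros lim_e) auto
    moreover have "(\<lambda>l. Zfield u l (\<lambda>x y z t. phi i x y z t l) x y z t)
        = (\<lambda>l. l * e 2 l - c - c * e 0 l + d * e 1 l)"
      unfolding Zfield_def pde using i2 by (auto simp: Ld_def c_def d_def algebra_simps)
    ultimately show ?thesis unfolding F_def by simp
  qed
qed

lemma jump_deriv:
  fixes P M1 M2 :: "real \<Rightarrow> real \<Rightarrow> real \<Rightarrow> real \<Rightarrow> complex"
  assumes Rh: "\<forall>z1 z2. ((\<lambda>w::complex \<times> complex. calR R i (fst w) (snd w) r) has_derivative
        (\<lambda>h. Jac R r z1 z2 i 1 * fst h + Jac R r z1 z2 i 2 * snd h)) (at (z1, z2))"
  and jump: "\<forall>x y z t. P x y z t = calR R i (M1 x y z t) (M2 x y z t) r"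
  and d1: "along k M1 x y z t differentiable at (coord k x y z t)"
  and d2: "along k M2 x y z t differentiable at (coord k x y z t)"
  shows "pd k P x y z t = Jac R r (M1 x y z t) (M2 x y z t) i 1 * pd k M1 x y z t
           + Jac R r (M1 x y z t) (M2 x y z t) i 2 * pd k M2 x y z t"
proof -
  have eq: "along k P x y z t = (\<lambda>s. calR R i (along k M1 x y z t s) (along k M2 x y z t s) r)"
    by (rule ext) (simp add: along_def jump)
  have R0: "((\<lambda>w::complex \<times> complex. calR R i (fst w) (snd w) r) has_derivative
        (\<lambda>h. Jac R r (M1 x y z t) (M2 x y z t) i 1 * fst h + Jac R r (M1 x y z t) (M2 x y z t) i 2 * snd h))
        (at (along k M1 x y z t (coord k x y z t), along k M2 x y z t (coord k x y z t)))"
    using Rh by (simp add: along_coord)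
  have "((\<lambda>s. calR R i (along k M1 x y z t s) (along k M2 x y z t s) r) has_vector_derivative
      (Jac R r (M1 x y z t) (M2 x y z t) i 1 * pd k M1 x y z t
           + Jac R r (M1 x y z t) (M2 x y z t) i 2 * pd k M2 x y z t)) (at (coord k x y z t))"
    unfolding pd_def
    by (rule chain2[OF d1[unfolded vector_derivative_works] d2[unfolded vector_derivative_works] R0])
  then show ?thesis unfolding pd_def eq by (rule vector_derivative_at)
qed

theorem proposition5p1:
  fixes R :: "nat \<Rightarrow> complex \<Rightarrow> complex \<Rightarrow> real \<Rightarrow> complex"
    and phiP phiM :: "nat \<Rightarrow> real \<Rightarrow> real \<Rightarrow> real \<Rightarrow> real \<Rightarrow> complex \<Rightarrow> complex"
    and u :: "real \<Rightarrow> real \<Rightarrow> real \<Rightarrow> real \<Rightarrow> complex"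
  assumes R_holo: "\<forall>i\<in>{1,2}. \<forall>l z1 z2.
      ((\<lambda>w::complex \<times> complex. calR R i (fst w) (snd w) l) has_derivative
        (\<lambda>h. Jac R l z1 z2 i 1 * fst h + Jac R l z1 z2 i 2 * snd h)) (at (z1, z2))"
  and sol: "\<forall>x y z t. rh_solution R x y t (\<lambda>i. phiP i x y z t) (\<lambda>i. phiM i x y z t)"
  and uniq: "\<forall>x y z t P M. rh_solution R x y t P M \<longrightarrow>
      (\<forall>i\<in>{1,2}. (\<forall>l\<in>UHP. P i l = phiP i x y z t l) \<and> (\<forall>l\<in>LHP. M i l = phiM i x y z t l))"
  and lin_uniq: "\<forall>x y z t. \<forall>sP sM :: nat \<Rightarrow> complex \<Rightarrow> complex.
      (\<forall>i\<in>{1,2}. sP i holomorphic_on UHPo \<and> continuous_on UHP (sP i)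
               \<and> (sP i \<longlongrightarrow> 0) (at_inf_in UHP)
               \<and> sM i holomorphic_on LHPo \<and> continuous_on LHP (sM i)
               \<and> (sM i \<longlongrightarrow> 0) (at_inf_in LHP)) \<and>
      (\<forall>i\<in>{1,2}. \<forall>l::real.
         sP i (complex_of_real l) =
           Jac R l (phiM 1 x y z t l) (phiM 2 x y z t l) i 1 * sM 1 (complex_of_real l)
         + Jac R l (phiM 1 x y z t l) (phiM 2 x y z t l) i 2 * sM 2 (complex_of_real l))
      \<longrightarrow> (\<forall>i\<in>{1,2}. (\<forall>l\<in>UHP. sP i l = 0) \<and> (\<forall>l\<in>LHP. sM i l = 0))"
  and phi_diff: "\<forall>i\<in>{1,2}. \<forall>k<4. \<forall>x y z t.
      (\<forall>l\<in>UHP. along k (\<lambda>x y z t. phiP i x y z t l) x y z t differentiable (at (coord k x y z t))) \<and>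
      (\<forall>l\<in>LHP. along k (\<lambda>x y z t. phiM i x y z t l) x y z t differentiable (at (coord k x y z t)))"
  and phi_deriv_holo: "\<forall>i\<in>{1,2}. \<forall>k<4. \<forall>x y z t.
      (\<lambda>l. pd k (\<lambda>x y z t. phiP i x y z t l) x y z t) holomorphic_on UHPo \<and>
      continuous_on UHP (\<lambda>l. pd k (\<lambda>x y z t. phiP i x y z t l) x y z t) \<and>
      (\<lambda>l. pd k (\<lambda>x y z t. phiM i x y z t l) x y z t) holomorphic_on LHPo \<and>
      continuous_on LHP (\<lambda>l. pd k (\<lambda>x y z t. phiM i x y z t l) x y z t)"
  and u_diff: "\<forall>x y z t. along 0 u x y z t differentiable (at x) \<and> along 1 u x y z t differentiable (at y)"
  and u_def: "\<forall>i\<in>{1,2}. \<forall>x y z t.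
      ((\<lambda>l. l * (phiP i x y z t l - lead i x y z t l)) \<longlongrightarrow> pd (i - 1) u x y z t) (at_inf_in UHP) \<and>
      ((\<lambda>l. l * (phiM i x y z t l - lead i x y z t l)) \<longlongrightarrow> pd (i - 1) u x y z t) (at_inf_in LHP)"
  and termwise: "\<forall>i\<in>{1,2}. \<forall>k<4. \<forall>x y z t.
      along k (pd (i - 1) u) x y z t differentiable (at (coord k x y z t)) \<and>
      ((\<lambda>l. l * pd k (\<lambda>x y z t. phiP i x y z t l - lead i x y z t l) x y z t)
          \<longlongrightarrow> pd k (pd (i - 1) u) x y z t) (at_inf_in UHP) \<and>
      ((\<lambda>l. l * pd k (\<lambda>x y z t. phiM i x y z t l - lead i x y z t l) x y z t)
          \<longlongrightarrow> pd k (pd (i - 1) u) x y z t) (at_inf_in LHP)"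
  shows "\<forall>i\<in>{1,2}. \<forall>x y z t.
      (\<forall>l\<in>UHP. Tfield u l (\<lambda>x y z t. phiP i x y z t l) x y z t = 0 \<and>
               Zfield u l (\<lambda>x y z t. phiP i x y z t l) x y z t = 0) \<and>
      (\<forall>l\<in>LHP. Tfield u l (\<lambda>x y z t. phiM i x y z t l) x y z t = 0 \<and>
               Zfield u l (\<lambda>x y z t. phiM i x y z t l) x y z t = 0)"
proof (intro ballI allI)
  fix i :: nat and x y z t :: real assume i: "i \<in> {1,2}"

  have Tfield_res: "\<forall>j\<in>{1,2}. (\<forall>l\<in>UHP. Tfield u l (\<lambda>x y z t. phiP j x y z t l) x y z t = 0) \<and>
      (\<forall>l\<in>LHP. Tfield u l (\<lambda>x y z t. phiM j x y z t l) x y z t = 0)"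
  proof -
    define sP where "sP j l = Tfield u l (\<lambda>x y z t. phiP j x y z t l) x y z t" for j l
    define sM where "sM j l = Tfield u l (\<lambda>x y z t. phiM j x y z t l) x y z t" for j l
    have h1: "\<forall>j\<in>{1,2}. sP j holomorphic_on UHPo \<and> continuous_on UHP (sP j)
               \<and> (sP j \<longlongrightarrow> 0) (at_inf_in UHP)
               \<and> sM j holomorphic_on LHPo \<and> continuous_on LHP (sM j)
               \<and> (sM j \<longlongrightarrow> 0) (at_inf_in LHP)"
    proof
      fix j :: nat assume j: "j \<in> {1,2}"
      have H: "\<And>k. k < 4 \<Longrightarrow> (\<lambda>l. pd k (\<lambda>x y z t. phiP j x y z t l) x y z t) holomorphic_on UHPo \<and>
        continuous_on UHP (\<lambda>l. pd k (\<lambda>x y z t. phiP j x y z t l) x y z t) \<and>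
        (\<lambda>l. pd k (\<lambda>x y z t. phiM j x y z t l) x y z t) holomorphic_on LHPo \<and>
        continuous_on LHP (\<lambda>l. pd k (\<lambda>x y z t. phiM j x y z t l) x y z t)"
        using phi_deriv_holo j by blast
      note H0 = H[of 0, simplified] and H1 = H[of 1, simplified] and H2 = H[of 2, simplified]
        and H3 = H[of 3, simplified]
      have "sP j holomorphic_on UHPo" unfolding sP_def Tfield_def
        using H0 H1 H2 H3 by (intro holomorphic_intros) auto
      moreover have "sM j holomorphic_on LHPo" unfolding sM_def Tfield_def
        using H0 H1 H2 H3 by (intro holomorphic_intros) auto
      moreover have "continuous_on UHP (sP j)" unfolding sP_def Tfield_def
        using H0 H1 H2 H3 by (intro continuous_intros) auto
      moreover have "continuous_on LHP (sM j)" unfolding sM_def Tfield_def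
        using H0 H1 H2 H3 by (intro continuous_intros) auto
      moreover have "(sP j \<longlongrightarrow> 0) (at_inf_in UHP)" unfolding sP_def
        by (rule TZ_lim[where S=UHP and phi=phiP and i=j and u=u]) (use phi_diff termwise j in auto)
      moreover have "(sM j \<longlongrightarrow> 0) (at_inf_in LHP)" unfolding sM_def
        by (rule TZ_lim[where S=LHP and phi=phiM and i=j and u=u]) (use phi_diff termwise j in auto)
      ultimately show "sP j holomorphic_on UHPo \<and> continuous_on UHP (sP j)
               \<and> (sP j \<longlongrightarrow> 0) (at_inf_in UHP)
               \<and> sM j holomorphic_on LHPo \<and> continuous_on LHP (sM j)
               \<and> (sM j \<longlongrightarrow> 0) (at_inf_in LHP)" by blast
    qed
    have h2: "\<forall>j\<in>{1,2}. \<forall>r::real.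
         sP j (complex_of_real r) =
           Jac R r (phiM 1 x y z t r) (phiM 2 x y z t r) j 1 * sM 1 (complex_of_real r)
         + Jac R r (phiM 1 x y z t r) (phiM 2 x y z t r) j 2 * sM 2 (complex_of_real r)"
    proof (intro ballI allI)
      fix j :: nat and r :: real assume j: "j \<in> {1,2}"
      have rUHP: "complex_of_real r \<in> UHP" and rLHP: "complex_of_real r \<in> LHP"
        by (auto simp: UHP_def LHP_def)
      have D: "pd k (\<lambda>x y z t. phiP j x y z t r) x y z t =
          Jac R r (phiM 1 x y z t r) (phiM 2 x y z t r) j 1 * pd k (\<lambda>x y z t. phiM 1 x y z t r) x y z t
        + Jac R r (phiM 1 x y z t r) (phiM 2 x y z t r) j 2 * pd k (\<lambda>x y z t. phiM 2 x y z t r) x y z t"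
        if k: "k < 4" for k
      proof (rule jump_deriv)
        show "\<forall>z1 z2. ((\<lambda>w::complex \<times> complex. calR R j (fst w) (snd w) r) has_derivative
          (\<lambda>h. Jac R r z1 z2 j 1 * fst h + Jac R r z1 z2 j 2 * snd h)) (at (z1, z2))"
          using R_holo j by blast
        show "\<forall>x y z t. phiP j x y z t r = calR R j (phiM 1 x y z t r) (phiM 2 x y z t r) r"
          using sol j unfolding rh_solution_def by blast
        show "along k (\<lambda>x y z t. phiM 1 x y z t r) x y z t differentiable at (coord k x y z t)"
          using phi_diff k rLHP by blast
        show "along k (\<lambda>x y z t. phiM 2 x y z t r) x y z t differentiable at (coord k x y z t)"
          using phi_diff k rLHP by blast
      qed
      show "sP j (complex_of_real r) =
           Jac R r (phiM 1 x y z t r) (phiM 2 x y z t r) j 1 * sM 1 (complex_of_real r)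
         + Jac R r (phiM 1 x y z t r) (phiM 2 x y z t r) j 2 * sM 2 (complex_of_real r)"
        unfolding sP_def sM_def Tfield_def using D[of 0] D[of 1] D[of 2] D[of 3]
        by (simp add: algebra_simps)
    qed
    have "\<forall>j\<in>{1,2}. (\<forall>l\<in>UHP. sP j l = 0) \<and> (\<forall>l\<in>LHP. sM j l = 0)"
      using lin_uniq h1 h2 by blast
    then show ?thesis unfolding sP_def sM_def by blast
  qed

  have Zfield_res: "\<forall>j\<in>{1,2}. (\<forall>l\<in>UHP. Zfield u l (\<lambda>x y z t. phiP j x y z t l) x y z t = 0) \<and>
      (\<forall>l\<in>LHP. Zfield u l (\<lambda>x y z t. phiM j x y z t l) x y z t = 0)"
  proof -
    define sP where "sP j l = Zfield u l (\<lambda>x y z t. phiP j x y z t l) x y z t" for j l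
    define sM where "sM j l = Zfield u l (\<lambda>x y z t. phiM j x y z t l) x y z t" for j l
    have h1: "\<forall>j\<in>{1,2}. sP j holomorphic_on UHPo \<and> continuous_on UHP (sP j)
               \<and> (sP j \<longlongrightarrow> 0) (at_inf_in UHP)
               \<and> sM j holomorphic_on LHPo \<and> continuous_on LHP (sM j)
               \<and> (sM j \<longlongrightarrow> 0) (at_inf_in LHP)"
    proof
      fix j :: nat assume j: "j \<in> {1,2}"
      have H: "\<And>k. k < 4 \<Longrightarrow> (\<lambda>l. pd k (\<lambda>x y z t. phiP j x y z t l) x y z t) holomorphic_on UHPo \<and>
        continuous_on UHP (\<lambda>l. pd k (\<lambda>x y z t. phiP j x y z t l) x y z t) \<and>
        (\<lambda>l. pd k (\<lambda>x y z t. phiM j x y z t l) x y z t) holomorphic_on LHPo \<and>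
        continuous_on LHP (\<lambda>l. pd k (\<lambda>x y z t. phiM j x y z t l) x y z t)"
        using phi_deriv_holo j by blast
      note H0 = H[of 0, simplified] and H1 = H[of 1, simplified] and H2 = H[of 2, simplified]
        and H3 = H[of 3, simplified]
      have "sP j holomorphic_on UHPo" unfolding sP_def Zfield_def
        using H0 H1 H2 H3 by (intro holomorphic_intros) auto
      moreover have "sM j holomorphic_on LHPo" unfolding sM_def Zfield_def
        using H0 H1 H2 H3 by (intro holomorphic_intros) auto
      moreover have "continuous_on UHP (sP j)" unfolding sP_def Zfield_def
        using H0 H1 H2 H3 by (intro continuous_intros) auto
      moreover have "continuous_on LHP (sM j)" unfolding sM_def Zfield_def
        using H0 H1 H2 H3 by (intro continuous_intros) auto
      moreover have "(sP j \<longlongrightarrow> 0) (at_inf_in UHP)" unfolding sP_def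
        by (rule TZ_lim[where S=UHP and phi=phiP and i=j and u=u]) (use phi_diff termwise j in auto)
      moreover have "(sM j \<longlongrightarrow> 0) (at_inf_in LHP)" unfolding sM_def
        by (rule TZ_lim[where S=LHP and phi=phiM and i=j and u=u]) (use phi_diff termwise j in auto)
      ultimately show "sP j holomorphic_on UHPo \<and> continuous_on UHP (sP j)
               \<and> (sP j \<longlongrightarrow> 0) (at_inf_in UHP)
               \<and> sM j holomorphic_on LHPo \<and> continuous_on LHP (sM j)
               \<and> (sM j \<longlongrightarrow> 0) (at_inf_in LHP)" by blast
    qed
    have h2: "\<forall>j\<in>{1,2}. \<forall>r::real.
         sP j (complex_of_real r) =
           Jac R r (phiM 1 x y z t r) (phiM 2 x y z t r) j 1 * sM 1 (complex_of_real r)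
         + Jac R r (phiM 1 x y z t r) (phiM 2 x y z t r) j 2 * sM 2 (complex_of_real r)"
    proof (intro ballI allI)
      fix j :: nat and r :: real assume j: "j \<in> {1,2}"
      have rUHP: "complex_of_real r \<in> UHP" and rLHP: "complex_of_real r \<in> LHP"
        by (auto simp: UHP_def LHP_def)
      have D: "pd k (\<lambda>x y z t. phiP j x y z t r) x y z t =
          Jac R r (phiM 1 x y z t r) (phiM 2 x y z t r) j 1 * pd k (\<lambda>x y z t. phiM 1 x y z t r) x y z t
        + Jac R r (phiM 1 x y z t r) (phiM 2 x y z t r) j 2 * pd k (\<lambda>x y z t. phiM 2 x y z t r) x y z t"
        if k: "k < 4" for k
      proof (rule jump_deriv)
        show "\<forall>z1 z2. ((\<lambda>w::complex \<times> complex. calR R j (fst w) (snd w) r) has_derivative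
          (\<lambda>h. Jac R r z1 z2 j 1 * fst h + Jac R r z1 z2 j 2 * snd h)) (at (z1, z2))"
          using R_holo j by blast
        show "\<forall>x y z t. phiP j x y z t r = calR R j (phiM 1 x y z t r) (phiM 2 x y z t r) r"
          using sol j unfolding rh_solution_def by blast
        show "along k (\<lambda>x y z t. phiM 1 x y z t r) x y z t differentiable at (coord k x y z t)"
          using phi_diff k rLHP by blast
        show "along k (\<lambda>x y z t. phiM 2 x y z t r) x y z t differentiable at (coord k x y z t)"
          using phi_diff k rLHP by blast
      qed
      show "sP j (complex_of_real r) =
           Jac R r (phiM 1 x y z t r) (phiM 2 x y z t r) j 1 * sM 1 (complex_of_real r)
         + Jac R r (phiM 1 x y z t r) (phiM 2 x y z t r) j 2 * sM 2 (complex_of_real r)"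
        unfolding sP_def sM_def Zfield_def using D[of 0] D[of 1] D[of 2] D[of 3]
        by (simp add: algebra_simps)
    qed
    have "\<forall>j\<in>{1,2}. (\<forall>l\<in>UHP. sP j l = 0) \<and> (\<forall>l\<in>LHP. sM j l = 0)"
      using lin_uniq h1 h2 by blast
    then show ?thesis unfolding sP_def sM_def by blast
  qed

  show "(\<forall>l\<in>UHP. Tfield u l (\<lambda>x y z t. phiP i x y z t l) x y z t = 0 \<and>
               Zfield u l (\<lambda>x y z t. phiP i x y z t l) x y z t = 0) \<and>
      (\<forall>l\<in>LHP. Tfield u l (\<lambda>x y z t. phiM i x y z t l) x y z t = 0 \<and>
               Zfield u l (\<lambda>x y z t. phiM i x y z t l) x y z t = 0)"
    using Tfield_res Zfield_res i by blast
qed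

end
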